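(* Let $H$ be a graph obtained from a path $w_1w_2\cdots w_7$ by adding the edges of a matching $M$ on $\{w_1,\dots,w_7\}$. Then $H$ has a stable set $S$ with $|S|=3$ and $\{w_1,w_7\}\setminus S\neq\emptyset$.
   Context: A matching is a set of pairwise disjoint edges. A stable set is a set of pairwise non-adjacent vertices. Graphs are simple. *)

theory Defs
  imports Main
begin

definition matching_on :: "'a set set \<Rightarrow> 'a set \<Rightarrow> bool" where
  "matching_on M V \<longleftrightarrow> (\<forall>e\<in>M. e \<subseteq> V \<and> card e = 2) \<and>
     (\<forall>e\<in>M. \<forall>f\<in>M. e \<noteq> f \<longrightarrow> e \<inter> f = {})"

text \<open>Edges of the path w1 w2 ... w7 (vertex wi is represented by i) plus the edges of M.\<close>
definition path7_plus :: "nat set set \<Rightarrow> nat set set" where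
  "path7_plus M = {{i, Suc i} | i. 1 \<le> i \<and> i < 7} \<union> M"

definition stable_set :: "'a set \<Rightarrow> 'a set set \<Rightarrow> 'a set \<Rightarrow> bool" where
  "stable_set V E S \<longleftrightarrow> S \<subseteq> V \<and> (\<forall>u\<in>S. \<forall>v\<in>S. {u, v} \<notin> E)"

end

theory Submission
  imports Defs
begin

lemma stab:
  assumes m: "matching_on M {1..7}" and S: "S \<subseteq> {1..7}"
    and nc: "\<forall>u\<in>S. \<forall>v\<in>S. Suc u \<noteq> v"
    and nm: "\<forall>u\<in>S. \<forall>v\<in>S. u \<noteq> v \<longrightarrow> {u,v} \<notin> M"
  shows "stable_set {1..7} (path7_plus M) S"
  unfolding stable_set_def path7_plus_def
proof (intro conjI S ballI)
  fix u v assume u: "u \<in> S" and v: "v \<in> S"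
  have m2: "\<forall>e\<in>M. e \<subseteq> {1..7} \<and> card e = 2" using m by (simp add: matching_on_def)
  have p: "{u, v} \<notin> {{i, Suc i} |i. 1 \<le> i \<and> i < 7}"
  proof
    assume "{u, v} \<in> {{i, Suc i} |i. 1 \<le> i \<and> i < 7}"
    then obtain i where "{u,v} = {i, Suc i}" by auto
    then have "(u = i \<and> v = Suc i) \<or> (u = Suc i \<and> v = i)"
      by (simp add: doubleton_eq_iff)
    then show False using nc u v by auto
  qed
  have q: "{u, v} \<notin> M"
  proof
    assume a: "{u, v} \<in> M"
    show False
    proof (cases "u = v")
      case True
      have "card {u,v} = 2" using m2 a by auto
      then show False using True by simp
    next
      case False
      then show False using nm u v a by auto
    qed
  qed
  show "{u, v} \<notin> {{i, Suc i} |i. 1 \<le> i \<and> i < 7} \<union> M"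
    using p q by simp
qed

lemma confl:
  assumes m: "matching_on M V" and "{a,b} \<in> M" "{a,c} \<in> M" "b \<noteq> c"
  shows False
proof -
  have ne: "{a,b} \<noteq> {a,c}" using assms(4) by (metis insert_commute insert_iff singletonD)
  have d: "\<forall>e\<in>M. \<forall>f\<in>M. e \<noteq> f \<longrightarrow> e \<inter> f = {}" using m by (simp add: matching_on_def)
  show False using d assms(2,3) ne by (metis Int_iff empty_iff insertI1)
qed

theorem lemma18:
  fixes M :: "nat set set"
  assumes "matching_on M {1..7}"
  shows "\<exists>S. stable_set {1..7} (path7_plus M) S \<and> card S = 3 \<and> {1, 7} - S \<noteq> {}"
proof (rule ccontr)
  assume H: "\<not> ?thesis"
  have H': "\<And>S. stable_set {1..7} (path7_plus M) S \<Longrightarrow> card S = 3 \<Longrightarrow> {1, 7} - S \<noteq> {} \<Longrightarrow> False"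
    using H by auto
  have cf: "\<And>a b c. {a,b} \<in> M \<Longrightarrow> {a,c} \<in> M \<Longrightarrow> b \<noteq> c \<Longrightarrow> False"
    by (rule confl[OF assms])
  have T: "\<And>a b c. {a,b,c} \<subseteq> {1..7} \<Longrightarrow> \<forall>u\<in>{a,b,c}. \<forall>v\<in>{a,b,c}. Suc u \<noteq> v \<Longrightarrow> card {a,b,c} = 3 \<Longrightarrow> {1, 7} - {a,b,c} \<noteq> {}
     \<Longrightarrow> {a,b} \<in> M \<or> {a,c} \<in> M \<or> {b,c} \<in> M"
  proof -
    fix a b c :: nat
    assume h: "{a,b,c} \<subseteq> {1..7}" "\<forall>u\<in>{a,b,c}. \<forall>v\<in>{a,b,c}. Suc u \<noteq> v" "card {a,b,c} = 3" "{1, 7} - {a,b,c} \<noteq> {}"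
    have "\<not> (\<forall>u\<in>{a,b,c}. \<forall>v\<in>{a,b,c}. u \<noteq> v \<longrightarrow> {u,v} \<notin> M)"
    proof
      assume "\<forall>u\<in>{a,b,c}. \<forall>v\<in>{a,b,c}. u \<noteq> v \<longrightarrow> {u,v} \<notin> M"
      from stab[OF assms h(1,2) this] show False using H' h(3,4) by metis
    qed
    then show "{a,b} \<in> M \<or> {a,c} \<in> M \<or> {b,c} \<in> M"
      by (auto simp: insert_commute)
  qed
  have A: "{1,3} \<in> M \<or> {1,5} \<in> M \<or> {3,5} \<in> M" by (rule T) auto
  have B: "{1,3} \<in> M \<or> {1,6} \<in> M \<or> {3,6} \<in> M" by (rule T) auto
  have C: "{1,4} \<in> M \<or> {1,6} \<in> M \<or> {4,6} \<in> M" by (rule T) auto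
  have D: "{2,4} \<in> M \<or> {2,6} \<in> M \<or> {4,6} \<in> M" by (rule T) auto
  have E: "{2,4} \<in> M \<or> {2,7} \<in> M \<or> {4,7} \<in> M" by (rule T) auto
  have F: "{2,5} \<in> M \<or> {2,7} \<in> M \<or> {5,7} \<in> M" by (rule T) auto
  have G: "{3,5} \<in> M \<or> {3,7} \<in> M \<or> {5,7} \<in> M" by (rule T) auto
  have c1: "\<not> ({1,3} \<in> M \<and> {1,5} \<in> M)" using cf[of 1 3 5] by (auto simp: insert_commute)
  have c2: "\<not> ({1,3} \<in> M \<and> {3,5} \<in> M)" using cf[of 3 1 5] by (auto simp: insert_commute)
  have c3: "\<not> ({1,3} \<in> M \<and> {1,6} \<in> M)" using cf[of 1 3 6] by (auto simp: insert_commute)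
  have c4: "\<not> ({1,3} \<in> M \<and> {3,6} \<in> M)" using cf[of 3 1 6] by (auto simp: insert_commute)
  have c5: "\<not> ({1,3} \<in> M \<and> {1,4} \<in> M)" using cf[of 1 3 4] by (auto simp: insert_commute)
  have c6: "\<not> ({1,3} \<in> M \<and> {3,7} \<in> M)" using cf[of 3 1 7] by (auto simp: insert_commute)
  have c7: "\<not> ({1,5} \<in> M \<and> {3,5} \<in> M)" using cf[of 5 1 3] by (auto simp: insert_commute)
  have c8: "\<not> ({1,5} \<in> M \<and> {1,6} \<in> M)" using cf[of 1 5 6] by (auto simp: insert_commute)
  have c9: "\<not> ({1,5} \<in> M \<and> {1,4} \<in> M)" using cf[of 1 5 4] by (auto simp: insert_commute)
  have c10: "\<not> ({1,5} \<in> M \<and> {2,5} \<in> M)" using cf[of 5 1 2] by (auto simp: insert_commute)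
  have c11: "\<not> ({1,5} \<in> M \<and> {5,7} \<in> M)" using cf[of 5 1 7] by (auto simp: insert_commute)
  have c12: "\<not> ({3,5} \<in> M \<and> {3,6} \<in> M)" using cf[of 3 5 6] by (auto simp: insert_commute)
  have c13: "\<not> ({3,5} \<in> M \<and> {2,5} \<in> M)" using cf[of 5 3 2] by (auto simp: insert_commute)
  have c14: "\<not> ({3,5} \<in> M \<and> {5,7} \<in> M)" using cf[of 5 3 7] by (auto simp: insert_commute)
  have c15: "\<not> ({3,5} \<in> M \<and> {3,7} \<in> M)" using cf[of 3 5 7] by (auto simp: insert_commute)
  have c16: "\<not> ({1,6} \<in> M \<and> {3,6} \<in> M)" using cf[of 6 1 3] by (auto simp: insert_commute)
  have c17: "\<not> ({1,6} \<in> M \<and> {1,4} \<in> M)" using cf[of 1 6 4] by (auto simp: insert_commute)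
  have c18: "\<not> ({1,6} \<in> M \<and> {4,6} \<in> M)" using cf[of 6 1 4] by (auto simp: insert_commute)
  have c19: "\<not> ({1,6} \<in> M \<and> {2,6} \<in> M)" using cf[of 6 1 2] by (auto simp: insert_commute)
  have c20: "\<not> ({3,6} \<in> M \<and> {4,6} \<in> M)" using cf[of 6 3 4] by (auto simp: insert_commute)
  have c21: "\<not> ({3,6} \<in> M \<and> {2,6} \<in> M)" using cf[of 6 3 2] by (auto simp: insert_commute)
  have c22: "\<not> ({3,6} \<in> M \<and> {3,7} \<in> M)" using cf[of 3 6 7] by (auto simp: insert_commute)
  have c23: "\<not> ({1,4} \<in> M \<and> {4,6} \<in> M)" using cf[of 4 1 6] by (auto simp: insert_commute)
  have c24: "\<not> ({1,4} \<in> M \<and> {2,4} \<in> M)" using cf[of 4 1 2] by (auto simp: insert_commute)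
  have c25: "\<not> ({1,4} \<in> M \<and> {4,7} \<in> M)" using cf[of 4 1 7] by (auto simp: insert_commute)
  have c26: "\<not> ({4,6} \<in> M \<and> {2,4} \<in> M)" using cf[of 4 6 2] by (auto simp: insert_commute)
  have c27: "\<not> ({4,6} \<in> M \<and> {2,6} \<in> M)" using cf[of 6 4 2] by (auto simp: insert_commute)
  have c28: "\<not> ({4,6} \<in> M \<and> {4,7} \<in> M)" using cf[of 4 6 7] by (auto simp: insert_commute)
  have c29: "\<not> ({2,4} \<in> M \<and> {2,6} \<in> M)" using cf[of 2 4 6] by (auto simp: insert_commute)
  have c30: "\<not> ({2,4} \<in> M \<and> {2,7} \<in> M)" using cf[of 2 4 7] by (auto simp: insert_commute)
  have c31: "\<not> ({2,4} \<in> M \<and> {4,7} \<in> M)" using cf[of 4 2 7] by (auto simp: insert_commute)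
  have c32: "\<not> ({2,4} \<in> M \<and> {2,5} \<in> M)" using cf[of 2 4 5] by (auto simp: insert_commute)
  have c33: "\<not> ({2,6} \<in> M \<and> {2,7} \<in> M)" using cf[of 2 6 7] by (auto simp: insert_commute)
  have c34: "\<not> ({2,6} \<in> M \<and> {2,5} \<in> M)" using cf[of 2 6 5] by (auto simp: insert_commute)
  have c35: "\<not> ({2,7} \<in> M \<and> {4,7} \<in> M)" using cf[of 7 2 4] by (auto simp: insert_commute)
  have c36: "\<not> ({2,7} \<in> M \<and> {2,5} \<in> M)" using cf[of 2 7 5] by (auto simp: insert_commute)
  have c37: "\<not> ({2,7} \<in> M \<and> {5,7} \<in> M)" using cf[of 7 2 5] by (auto simp: insert_commute)
  have c38: "\<not> ({2,7} \<in> M \<and> {3,7} \<in> M)" using cf[of 7 2 3] by (auto simp: insert_commute)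
  have c39: "\<not> ({4,7} \<in> M \<and> {5,7} \<in> M)" using cf[of 7 4 5] by (auto simp: insert_commute)
  have c40: "\<not> ({4,7} \<in> M \<and> {3,7} \<in> M)" using cf[of 7 4 3] by (auto simp: insert_commute)
  have c41: "\<not> ({2,5} \<in> M \<and> {5,7} \<in> M)" using cf[of 5 2 7] by (auto simp: insert_commute)
  have c42: "\<not> ({5,7} \<in> M \<and> {3,7} \<in> M)" using cf[of 7 5 3] by (auto simp: insert_commute)
  show False using A B C D E F G c1 c2 c3 c4 c5 c6 c7 c8 c9 c10 c11 c12 c13 c14 c15 c16 c17 c18 c19 c20 c21 c22 c23 c24 c25 c26 c27 c28 c29 c30 c31 c32 c33 c34 c35 c36 c37 c38 c39 c40 c41 c42 by argo
qed

end
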